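(* Let $\mathcal D=\mathcal D(\Gamma,(g_i),(\chi_i),(a_{ij}))$ be a datum of finite Cartan type and $\lambda$ a family of linking parameters for $\mathcal D$. Assume one of the following: (1) the Cartan matrix $(a_{ij})$ is simply laced ($a_{ij}\in\{0,-1\}$ for all $i\ne j$) and $\operatorname{ord}(q_{ii})$ is odd for all $1\le i\le\theta$; or (2) $q_{ii}$ is not a root of unity for all $1\le i\le\theta$. Then the linking graph of $(\mathcal D,\lambda)$ is bipartite.
   Context: $k$ is an algebraically closed field of characteristic zero. A datum of finite Cartan type $\mathcal D=\mathcal D(\Gamma,(g_i)_{1\le i\le\theta},(\chi_i)_{1\le i\le\theta},(a_{ij})_{1\le i,j\le\theta})$ consists of an abelian group $\Gamma$, elements $g_i\in\Gamma$, characters $\chi_i:\Gamma\to k^\times$, and a Cartan matrix $(a_{ij})$ of finite type such that, with $q_{ij}=\chi_j(g_i)$, $q_{ij}q_{ji}=q_{ii}^{a_{ij}}$ and $q_{ii}\ne1$ for all $i,j$. Write $i\sim j$ if $i,j$ lie in the same connected component of the Dynkin diagram of $(a_{ij})$; let $\mathcal X$ be the set of connected components of $\{1,\dots,\theta\}$. A family of linking parameters is $\lambda=(\lambda_{ij})_{1\le i,j\le\theta,\,i\not\sim j}$ with $\lambda_{ij}\in k$, $\lambda_{ij}=0$ whenever $g_ig_j=1$ or $\chi_i\chi_j\ne\varepsilon$ (trivial character), and $\lambda_{ji}=-q_{ji}\lambda_{ij}$. Vertices $i,j$ are linkable if $i\not\sim j$, $g_ig_j\ne1$ and $\chi_i\chi_j=\varepsilon$;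 they are linked if moreover $\lambda_{ij}\ne0$. The linking graph of $(\mathcal D,\lambda)$ has vertex set $\mathcal X$, with an edge between $J_1,J_2\in\mathcal X$ iff there are $i\in J_1$, $j\in J_2$ that are linked. A graph is bipartite if its vertex set is a disjoint union of two subsets with no edge inside either subset. *)

theory Defs
  imports "HOL-Computational_Algebra.Polynomial"
begin

(* The abelian group Gamma is a type
   'g :: ab_group_add, written additively: the product g_i g_j is g i + g j and
   the unit 1 is 0. Characters Gamma -> k^x are maps chi with chi(a+b)=chi a * chi b,
   chi a \<noteq> 0. *)

definition idx :: "nat \<Rightarrow> nat set" where
  "idx \<theta> = {1..\<theta>}"

definition is_character :: "('g::ab_group_add \<Rightarrow> 'k::field) \<Rightarrow> bool" where
  "is_character \<chi> \<longleftrightarrow> (\<forall>a b. \<chi> (a + b) = \<chi> a * \<chi> b) \<and> (\<forall>a. \<chi> a \<noteq> 0)"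

definition finite_type_cartan :: "nat \<Rightarrow> (nat \<Rightarrow> nat \<Rightarrow> int) \<Rightarrow> bool" where
  "finite_type_cartan \<theta> a \<longleftrightarrow>
     (\<forall>i\<in>idx \<theta>. a i i = 2) \<and>
     (\<forall>i\<in>idx \<theta>. \<forall>j\<in>idx \<theta>. i \<noteq> j \<longrightarrow> a i j \<le> 0) \<and>
     (\<forall>i\<in>idx \<theta>. \<forall>j\<in>idx \<theta>. a i j = 0 \<longleftrightarrow> a j i = 0) \<and>
     (\<exists>d :: nat \<Rightarrow> real. (\<forall>i\<in>idx \<theta>. d i > 0) \<and>
        (\<forall>i\<in>idx \<theta>. \<forall>j\<in>idx \<theta>. d i * of_int (a i j) = d j * of_int (a j i)) \<and>
        (\<forall>x :: nat \<Rightarrow> real. (\<exists>i\<in>idx \<theta>. x i \<noteq> 0) \<longrightarrow>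
           (\<Sum>i\<in>idx \<theta>. \<Sum>j\<in>idx \<theta>. x i * d i * of_int (a i j) * x j) > 0))"


definition qm :: "(nat \<Rightarrow> 'g \<Rightarrow> 'k) \<Rightarrow> (nat \<Rightarrow> 'g) \<Rightarrow> nat \<Rightarrow> nat \<Rightarrow> 'k" where
  "qm \<chi> g i j = \<chi> j (g i)"

definition finite_cartan_datum ::
  "nat \<Rightarrow> (nat \<Rightarrow> 'g::ab_group_add) \<Rightarrow> (nat \<Rightarrow> 'g \<Rightarrow> 'k::field) \<Rightarrow> (nat \<Rightarrow> nat \<Rightarrow> int) \<Rightarrow> bool" where
  "finite_cartan_datum \<theta> g \<chi> a \<longleftrightarrow>
     (\<forall>i\<in>idx \<theta>. is_character (\<chi> i)) \<and>
     finite_type_cartan \<theta> a \<and>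
     (\<forall>i\<in>idx \<theta>. \<forall>j\<in>idx \<theta>. qm \<chi> g i j * qm \<chi> g j i = qm \<chi> g i i powi a i j) \<and>
     (\<forall>i\<in>idx \<theta>. qm \<chi> g i i \<noteq> 1)"

definition dynkin_adj :: "nat \<Rightarrow> (nat \<Rightarrow> nat \<Rightarrow> int) \<Rightarrow> nat \<Rightarrow> nat \<Rightarrow> bool" where
  "dynkin_adj \<theta> a i j \<longleftrightarrow> i \<in> idx \<theta> \<and> j \<in> idx \<theta> \<and> i \<noteq> j \<and> a i j \<noteq> 0"

definition same_comp :: "nat \<Rightarrow> (nat \<Rightarrow> nat \<Rightarrow> int) \<Rightarrow> nat \<Rightarrow> nat \<Rightarrow> bool" where
  "same_comp \<theta> a i j \<longleftrightarrow> i \<in> idx \<theta> \<and> j \<in> idx \<theta> \<and>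
     (\<lambda>x y. dynkin_adj \<theta> a x y \<or> dynkin_adj \<theta> a y x)\<^sup>*\<^sup>* i j"

definition component :: "nat \<Rightarrow> (nat \<Rightarrow> nat \<Rightarrow> int) \<Rightarrow> nat \<Rightarrow> nat set" where
  "component \<theta> a i = {j. same_comp \<theta> a i j}"

definition components :: "nat \<Rightarrow> (nat \<Rightarrow> nat \<Rightarrow> int) \<Rightarrow> nat set set" where
  "components \<theta> a = component \<theta> a ` idx \<theta>"

definition trivial_product :: "(nat \<Rightarrow> 'g \<Rightarrow> 'k::field) \<Rightarrow> nat \<Rightarrow> nat \<Rightarrow> bool" where
  "trivial_product \<chi> i j \<longleftrightarrow> (\<forall>x. \<chi> i x * \<chi> j x = 1)"

definition linking_parameters ::
  "nat \<Rightarrow> (nat \<Rightarrow> 'g::ab_group_add) \<Rightarrow> (nat \<Rightarrow> 'g \<Rightarrow> 'k::field) \<Rightarrow> (nat \<Rightarrow> nat \<Rightarrow> int)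
     \<Rightarrow> (nat \<Rightarrow> nat \<Rightarrow> 'k) \<Rightarrow> bool" where
  "linking_parameters \<theta> g \<chi> a lam \<longleftrightarrow>
     (\<forall>i\<in>idx \<theta>. \<forall>j\<in>idx \<theta>. \<not> same_comp \<theta> a i j \<longrightarrow>
        ((g i + g j = 0 \<or> \<not> trivial_product \<chi> i j) \<longrightarrow> lam i j = 0) \<and>
        lam j i = - qm \<chi> g j i * lam i j)"

definition linkable ::
  "nat \<Rightarrow> (nat \<Rightarrow> 'g::ab_group_add) \<Rightarrow> (nat \<Rightarrow> 'g \<Rightarrow> 'k::field) \<Rightarrow> (nat \<Rightarrow> nat \<Rightarrow> int) \<Rightarrow> nat \<Rightarrow> nat \<Rightarrow> bool" where
  "linkable \<theta> g \<chi> a i j \<longleftrightarrow> i \<in> idx \<theta> \<and> j \<in> idx \<theta> \<and> \<not> same_comp \<theta> a i j \<and>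
     g i + g j \<noteq> 0 \<and> trivial_product \<chi> i j"

definition linked ::
  "nat \<Rightarrow> (nat \<Rightarrow> 'g::ab_group_add) \<Rightarrow> (nat \<Rightarrow> 'g \<Rightarrow> 'k::field) \<Rightarrow> (nat \<Rightarrow> nat \<Rightarrow> int)
     \<Rightarrow> (nat \<Rightarrow> nat \<Rightarrow> 'k) \<Rightarrow> nat \<Rightarrow> nat \<Rightarrow> bool" where
  "linked \<theta> g \<chi> a lam i j \<longleftrightarrow> linkable \<theta> g \<chi> a i j \<and> lam i j \<noteq> 0"

definition linking_edge ::
  "nat \<Rightarrow> (nat \<Rightarrow> 'g::ab_group_add) \<Rightarrow> (nat \<Rightarrow> 'g \<Rightarrow> 'k::field) \<Rightarrow> (nat \<Rightarrow> nat \<Rightarrow> int)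
     \<Rightarrow> (nat \<Rightarrow> nat \<Rightarrow> 'k) \<Rightarrow> nat set \<Rightarrow> nat set \<Rightarrow> bool" where
  "linking_edge \<theta> g \<chi> a lam J1 J2 \<longleftrightarrow>
     (\<exists>i\<in>J1. \<exists>j\<in>J2. linked \<theta> g \<chi> a lam i j)"

definition bipartite :: "'v set \<Rightarrow> ('v \<Rightarrow> 'v \<Rightarrow> bool) \<Rightarrow> bool" where
  "bipartite V E \<longleftrightarrow> (\<exists>A B. A \<inter> B = {} \<and> A \<union> B = V \<and>
      (\<forall>x\<in>A. \<forall>y\<in>A. \<not> E x y) \<and> (\<forall>x\<in>B. \<forall>y\<in>B. \<not> E x y))"

definition simply_laced :: "nat \<Rightarrow> (nat \<Rightarrow> nat \<Rightarrow> int) \<Rightarrow> bool" where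
  "simply_laced \<theta> a \<longleftrightarrow> (\<forall>i\<in>idx \<theta>. \<forall>j\<in>idx \<theta>. i \<noteq> j \<longrightarrow> a i j \<in> {0, -1})"

definition root_of_unity :: "'k::field \<Rightarrow> bool" where
  "root_of_unity z \<longleftrightarrow> (\<exists>n>0. z ^ n = 1)"

(* multiplicative order; 0 if infinite (so "odd order" forces finite order) *)
definition mult_ord :: "'k::field \<Rightarrow> nat" where
  "mult_ord z = (if root_of_unity z then (LEAST n. n > 0 \<and> z ^ n = 1) else 0)"

end

theory Submission
  imports Defs
begin

lemma choose_S:
  fixes R :: "'k::field \<Rightarrow> 'k \<Rightarrow> bool" and V :: "'k set"
  assumes sym: "\<And>z w. R z w \<Longrightarrow> R w z"
    and trans: "\<And>z w u. R z w \<Longrightarrow> R w u \<Longrightarrow> R z u"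
    and inv: "\<And>z w. R z w \<Longrightarrow> R (inverse z) (inverse w)"
    and refl: "\<And>z. z \<in> V \<Longrightarrow> R z z"
    and nz: "\<And>z. z \<in> V \<Longrightarrow> \<not> R z (inverse z)"
  shows "\<exists>S. (\<forall>z\<in>V. z \<in> S \<longleftrightarrow> inverse z \<notin> S) \<and>
             (\<forall>z w. R z w \<longrightarrow> (z \<in> S \<longleftrightarrow> w \<in> S))"
proof -
  define rep where "rep z = (SOME w. R w z \<or> R w (inverse z))" for z
  define S where "S = {z. R (rep z) z}"
  have repeq: "rep z = rep w" if "R z w" for z w
  proof -
    have "(\<lambda>x. R x z \<or> R x (inverse z)) = (\<lambda>x. R x w \<or> R x (inverse w))"
      using that inv sym trans by blast
    then show ?thesis unfolding rep_def by simp
  qed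
  have repinv: "rep (inverse z) = rep z" for z
    unfolding rep_def by (metis inverse_inverse_eq)
  have P1: "\<forall>z\<in>V. z \<in> S \<longleftrightarrow> inverse z \<notin> S"
  proof
    fix z assume z: "z \<in> V"
    have "R (rep z) z \<or> R (rep z) (inverse z)"
      unfolding rep_def by (rule someI[where x=z]) (use refl z in blast)
    moreover have "\<not> (R (rep z) z \<and> R (rep z) (inverse z))"
      using nz[OF z] sym trans by blast
    ultimately show "z \<in> S \<longleftrightarrow> inverse z \<notin> S"
      unfolding S_def using repinv by auto
  qed
  have P2: "\<forall>z w. R z w \<longrightarrow> (z \<in> S \<longleftrightarrow> w \<in> S)"
    unfolding S_def using repeq sym trans by (metis mem_Collect_eq)
  show ?thesis using P1 P2 by blast
qed

lemma same_comp_refl: "i \<in> idx \<theta> \<Longrightarrow> same_comp \<theta> a i i"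
  unfolding same_comp_def by simp

lemma linked_inv:
  assumes D: "finite_cartan_datum \<theta> g \<chi> a"
    and L: "linked \<theta> g \<chi> a lam i j"
  shows "qm \<chi> g j j = inverse (qm \<chi> g i i)"
proof -
  have i: "i \<in> idx \<theta>" and j: "j \<in> idx \<theta>" and ns: "\<not> same_comp \<theta> a i j"
    and tp: "trivial_product \<chi> i j"
    using L unfolding linked_def linkable_def by auto
  have ij: "i \<noteq> j" using ns same_comp_refl i by blast
  have a0: "a i j = 0"
  proof (rule ccontr)
    assume "a i j \<noteq> 0"
    then have "dynkin_adj \<theta> a i j" using i j ij unfolding dynkin_adj_def by simp
    then have "same_comp \<theta> a i j" using i j unfolding same_comp_def by auto
    then show False using ns by simp
  qed
  have e1: "qm \<chi> g i i * qm \<chi> g i j = 1"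
    using tp unfolding trivial_product_def qm_def by simp
  have e2: "qm \<chi> g j i * qm \<chi> g j j = 1"
    using tp unfolding trivial_product_def qm_def by simp
  have e3: "qm \<chi> g i j * qm \<chi> g j i = 1"
    using D i j a0 unfolding finite_cartan_datum_def by auto
  have "qm \<chi> g j j = qm \<chi> g i j"
    using e2 e3 by (metis mult.commute mult.left_neutral mult.assoc)
  then show ?thesis using e1 by (metis inverse_unique mult.commute)
qed

lemma adj_facts:
  assumes D: "finite_cartan_datum \<theta> g \<chi> a" and A: "dynkin_adj \<theta> a x y"
  shows "a x y < 0 \<and> a y x < 0 \<and>
         qm \<chi> g x x powi a x y = qm \<chi> g y y powi a y x \<and> x \<in> idx \<theta> \<and> y \<in> idx \<theta>"
proof -
  have x: "x \<in> idx \<theta>" and y: "y \<in> idx \<theta>" and xy: "x \<noteq> y" and n: "a x y \<noteq> 0"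
    using A unfolding dynkin_adj_def by auto
  have C: "finite_type_cartan \<theta> a" using D unfolding finite_cartan_datum_def by simp
  have n2: "a y x \<noteq> 0" using C x y n unfolding finite_type_cartan_def by blast
  have l1: "a x y \<le> 0" "a y x \<le> 0" using C x y xy unfolding finite_type_cartan_def by auto
  have e1: "qm \<chi> g x y * qm \<chi> g y x = qm \<chi> g x x powi a x y"
    and e2: "qm \<chi> g y x * qm \<chi> g x y = qm \<chi> g y y powi a y x"
    using D x y unfolding finite_cartan_datum_def by auto
  show ?thesis using e1 e2 n n2 l1 x y by (simp add: mult.commute)
qed

lemma comp_R:
  fixes R :: "'k::field \<Rightarrow> 'k \<Rightarrow> bool"
  assumes sym: "\<And>z w. R z w \<Longrightarrow> R w z"
    and trans: "\<And>z w u. R z w \<Longrightarrow> R w u \<Longrightarrow> R z u"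
    and refl: "\<And>i. i \<in> idx \<theta> \<Longrightarrow> R (q i) (q i)"
    and adj: "\<And>x y. dynkin_adj \<theta> a x y \<Longrightarrow> R (q x) (q y)"
    and sc: "same_comp \<theta> a i j"
  shows "R (q i) (q j)"
proof -
  have i: "i \<in> idx \<theta>" and st: "(\<lambda>x y. dynkin_adj \<theta> a x y \<or> dynkin_adj \<theta> a y x)\<^sup>*\<^sup>* i j"
    using sc unfolding same_comp_def by auto
  from st show ?thesis
  proof (induction rule: rtranclp_induct)
    case base then show ?case using refl i by simp
  next
    case (step y z)
    then show ?case using adj sym trans by blast
  qed
qed

lemma main_gen:
  fixes R :: "'k::field \<Rightarrow> 'k \<Rightarrow> bool" and V :: "'k set"
  assumes D: "finite_cartan_datum \<theta> g \<chi> a"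
    and sym: "\<And>z w. R z w \<Longrightarrow> R w z"
    and trans: "\<And>z w u. R z w \<Longrightarrow> R w u \<Longrightarrow> R z u"
    and inv: "\<And>z w. R z w \<Longrightarrow> R (inverse z) (inverse w)"
    and refl: "\<And>z. z \<in> V \<Longrightarrow> R z z"
    and nz: "\<And>z. z \<in> V \<Longrightarrow> \<not> R z (inverse z)"
    and qV: "\<And>i. i \<in> idx \<theta> \<Longrightarrow> qm \<chi> g i i \<in> V"
    and adj: "\<And>x y. dynkin_adj \<theta> a x y \<Longrightarrow> R (qm \<chi> g x x) (qm \<chi> g y y)"
  shows "bipartite (components \<theta> a) (linking_edge \<theta> g \<chi> a lam)"
proof -
  define q where "q i = qm \<chi> g i i" for i
  obtain S where S1: "\<forall>z\<in>V. z \<in> S \<longleftrightarrow> inverse z \<notin> S"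
    and S2: "\<forall>z w. R z w \<longrightarrow> (z \<in> S \<longleftrightarrow> w \<in> S)"
    using choose_S[of R V] sym trans inv refl nz by blast
  have cR: "R (q i) (q j)" if "same_comp \<theta> a i j" for i j
    using comp_R[of R \<theta> q a i j] sym trans refl qV adj that unfolding q_def by blast
  define A where "A = {J \<in> components \<theta> a. \<exists>i\<in>J. q i \<in> S}"
  define B where "B = components \<theta> a - A"
  have memA: "q i \<in> S" if JA: "J \<in> A" "i \<in> J" for J i
  proof -
    obtain i0 where i0: "i0 \<in> idx \<theta>" "J = component \<theta> a i0"
      using JA(1) unfolding A_def components_def by blast
    obtain i1 where i1: "i1 \<in> J" "q i1 \<in> S" using JA unfolding A_def by auto
    have "R (q i0) (q i1)" "R (q i0) (q i)" using cR i0 i1 JA unfolding component_def by auto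
    then show ?thesis using S2 i1 sym trans by blast
  qed
  have memB: "q i \<notin> S" if "J \<in> B" "i \<in> J" for J i
    using that unfolding A_def B_def by auto
  have lk: "q j = inverse (q i) \<and> i \<in> idx \<theta>" if "linked \<theta> g \<chi> a lam i j" for i j
    using linked_inv[OF D that] that unfolding q_def linked_def linkable_def by auto
  have "A \<inter> B = {}" "A \<union> B = components \<theta> a" unfolding A_def B_def by auto
  moreover have "\<forall>x\<in>A. \<forall>y\<in>A. \<not> linking_edge \<theta> g \<chi> a lam x y"
    unfolding linking_edge_def using memA lk S1 qV unfolding q_def by metis
  moreover have "\<forall>x\<in>B. \<forall>y\<in>B. \<not> linking_edge \<theta> g \<chi> a lam x y"
    unfolding linking_edge_def using memB lk S1 qV unfolding q_def by metis
  ultimately show ?thesis unfolding bipartite_def by blast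
qed

definition comm :: "'k::field \<Rightarrow> 'k \<Rightarrow> bool" where
  "comm z w \<longleftrightarrow> (\<exists>m>0. \<exists>n>0. z ^ m = w ^ n)"

lemma comm_sym: assumes "comm z w" shows "comm w z"
proof -
  obtain m n where mn: "m > 0" "n > 0" "z ^ m = w ^ n" using assms unfolding comm_def by blast
  have e: "w ^ n = z ^ m" using mn(3) by (rule sym)
  show ?thesis unfolding comm_def
    by (rule exI[where x=n], rule conjI[OF mn(2)], rule exI[where x=m], rule conjI[OF mn(1)], rule e)
qed

lemma comm_trans: assumes "comm z w" "comm w u" shows "comm z u"
proof -
  obtain m n where mn: "m > 0" "n > 0" "z ^ m = w ^ n" using assms(1) unfolding comm_def by blast
  obtain p r where pr: "p > 0" "r > 0" "w ^ p = u ^ r" using assms(2) unfolding comm_def by blast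
  have "z ^ (m * p) = (z ^ m) ^ p" by (rule power_mult)
  also have "\<dots> = (w ^ n) ^ p" by (simp only: mn(3))
  also have "\<dots> = w ^ (n * p)" by (rule power_mult[symmetric])
  also have "\<dots> = w ^ (p * n)" by (simp only: mult.commute[of n p])
  also have "\<dots> = (w ^ p) ^ n" by (rule power_mult)
  also have "\<dots> = (u ^ r) ^ n" by (simp only: pr(3))
  also have "\<dots> = u ^ (r * n)" by (rule power_mult[symmetric])
  finally have e: "z ^ (m * p) = u ^ (r * n)" .
  have mp: "m * p > 0" and rn: "r * n > 0" using mn(1,2) pr(1,2) by auto
  show ?thesis unfolding comm_def
    by (rule exI[where x="m * p"], rule conjI[OF mp], rule exI[where x="r * n"], rule conjI[OF rn], rule e)
qed

lemma comm_inv: assumes "comm z w" shows "comm (inverse z) (inverse w)"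
proof -
  obtain m n where mn: "m > 0" "n > 0" "z ^ m = w ^ n" using assms unfolding comm_def by blast
  have "inverse (z ^ m) = inverse (w ^ n)" using mn(3) by (rule arg_cong)
  then have e: "inverse z ^ m = inverse w ^ n" by (simp only: power_inverse)
  show ?thesis unfolding comm_def
    by (rule exI[where x=m], rule conjI[OF mn(1)], rule exI[where x=n], rule conjI[OF mn(2)], rule e)
qed

lemma sl_mem: "simply_laced \<theta> a \<Longrightarrow> i \<in> idx \<theta> \<Longrightarrow> j \<in> idx \<theta> \<Longrightarrow> i \<noteq> j \<Longrightarrow> a i j \<in> {0, -1}"
  unfolding simply_laced_def by simp

lemma powi_neg_eq:
  fixes x y :: "'k::field"
  assumes "x powi a = y powi b" "a < 0" "b < 0"
  shows "x ^ nat (-a) = y ^ nat (-b)"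
proof -
  have ea: "a = - int (nat (-a))" and eb: "b = - int (nat (-b))" using assms by auto
  have "x powi a = inverse (x ^ nat (-a))"
    by (subst ea) (simp only: power_int_minus power_int_of_nat)
  moreover have "y powi b = inverse (y ^ nat (-b))"
    by (subst eb) (simp only: power_int_minus power_int_of_nat)
  ultimately have "inverse (x ^ nat (-a)) = inverse (y ^ nat (-b))"
    using assms(1) by simp
  then show ?thesis by simp
qed

theorem lemma3p2:
  fixes \<theta> :: nat
    and g :: "nat \<Rightarrow> 'g::ab_group_add"
    and \<chi> :: "nat \<Rightarrow> 'g \<Rightarrow> 'k::{alg_closed_field, field_char_0}"
    and a :: "nat \<Rightarrow> nat \<Rightarrow> int"
    and lam :: "nat \<Rightarrow> nat \<Rightarrow> 'k"
  assumes "finite_cartan_datum \<theta> g \<chi> a"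
    and "linking_parameters \<theta> g \<chi> a lam"
    and "(simply_laced \<theta> a \<and> (\<forall>i\<in>idx \<theta>. odd (mult_ord (qm \<chi> g i i))))
         \<or> (\<forall>i\<in>idx \<theta>. \<not> root_of_unity (qm \<chi> g i i))"
  shows "bipartite (components \<theta> a) (linking_edge \<theta> g \<chi> a lam)"
proof -
  note D = assms(1)
  have q0: "qm \<chi> g i i \<noteq> 0" if "i \<in> idx \<theta>" for i
  proof -
    have "is_character (\<chi> i)" using D that unfolding finite_cartan_datum_def by simp
    then show ?thesis unfolding is_character_def qm_def by simp
  qed
  have q1: "qm \<chi> g i i \<noteq> 1" if "i \<in> idx \<theta>" for i
    using D that unfolding finite_cartan_datum_def by simp
  from assms(3) show ?thesis
  proof
    assume H: "simply_laced \<theta> a \<and> (\<forall>i\<in>idx \<theta>. odd (mult_ord (qm \<chi> g i i)))"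
    let ?V = "{z::'k. z \<noteq> 0 \<and> z * z \<noteq> 1}"
    show ?thesis
    proof (rule main_gen[of \<theta> g \<chi> a "(=)" ?V])
      show "z \<noteq> inverse z" if "z \<in> ?V" for z :: 'k
      proof
        assume e: "z = inverse z"
        have "z * inverse z = 1" using that by simp
        then have "z * z = 1" using e by metis
        then show False using that by simp
      qed
      show "qm \<chi> g i i \<in> ?V" if i: "i \<in> idx \<theta>" for i
      proof -
        let ?z = "qm \<chi> g i i"
        have "?z * ?z \<noteq> 1"
        proof
          assume sq: "?z * ?z = 1"
          then have r: "root_of_unity ?z" unfolding root_of_unity_def
            by (intro exI[of _ 2]) (simp add: power2_eq_square)
          have "(LEAST n. n > 0 \<and> ?z ^ n = 1) = 2"
          proof (rule Least_equality)
            show "0 < (2::nat) \<and> ?z ^ 2 = 1" using sq by (simp add: power2_eq_square)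
            show "2 \<le> n" if "0 < n \<and> ?z ^ n = 1" for n
            proof (rule ccontr)
              assume "\<not> 2 \<le> n"
              then have "n = 1" using that by simp
              then show False using that q1[OF i] by simp
            qed
          qed
          then have "mult_ord ?z = 2" using r unfolding mult_ord_def by simp
          moreover have "odd (mult_ord ?z)" using H i by simp
          ultimately show False by simp
        qed
        then show ?thesis using q0[OF i] by simp
      qed
      show "qm \<chi> g x x = qm \<chi> g y y" if A: "dynkin_adj \<theta> a x y" for x y
      proof -
        have F: "a x y < 0 \<and> a y x < 0 \<and>
         qm \<chi> g x x powi a x y = qm \<chi> g y y powi a y x \<and> x \<in> idx \<theta> \<and> y \<in> idx \<theta>"
          by (rule adj_facts[OF D A])
        have xy: "x \<noteq> y" using A unfolding dynkin_adj_def by simp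
        have xi: "x \<in> idx \<theta>" "y \<in> idx \<theta>" using F by auto
        have sl: "simply_laced \<theta> a" using H by simp
        have m1: "a x y \<in> {0, -1}" using sl_mem[OF sl xi(1) xi(2) xy] .
        have yx: "y \<noteq> x" using xy by simp
        have m2: "a y x \<in> {0, -1}" using sl_mem[OF sl xi(2) xi(1) yx] .
        have n1: "a x y < 0" "a y x < 0" using F by auto
        have "a x y = -1" using m1 n1 by auto
        moreover have "a y x = -1" using m2 n1 by auto
        ultimately have "qm \<chi> g x x ^ 1 = qm \<chi> g y y ^ 1" using powi_neg_eq[of "qm \<chi> g x x" "a x y" "qm \<chi> g y y" "a y x"] F by simp
        then show ?thesis by simp
      qed
      show "z = w" if "w = z" for z w :: 'k using that by simp
      show "z = u" if "z = w" "w = u" for z w u :: 'k using that by simp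
      show "inverse z = inverse w" if "z = w" for z w :: 'k using that by simp
      show "z = z" for z :: 'k by simp
    qed (rule D)
  next
    assume H: "\<forall>i\<in>idx \<theta>. \<not> root_of_unity (qm \<chi> g i i)"
    let ?V = "{z::'k. z \<noteq> 0 \<and> \<not> root_of_unity z}"
    show ?thesis
    proof (rule main_gen[of \<theta> g \<chi> a comm ?V])
      show "comm w z" if "comm z w" for z w :: 'k using that by (rule comm_sym)
      show "comm z u" if "comm z w" "comm w u" for z w u :: 'k using that by (rule comm_trans)
      show "comm (inverse z) (inverse w)" if "comm z w" for z w :: 'k using that by (rule comm_inv)
      show "comm z z" for z :: 'k unfolding comm_def by (metis power_one_right zero_less_one)
      show "\<not> comm z (inverse z)" if "z \<in> ?V" for z
      proof
        assume "comm z (inverse z)"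
        then obtain m n where mn: "m > 0" "n > 0" "z ^ m = inverse z ^ n" unfolding comm_def by blast
        have "z ^ (m + n) = z ^ m * z ^ n" by (simp add: power_add)
        also have "\<dots> = 1" using mn(3) that by (simp add: power_inverse)
        finally have e: "z ^ (m + n) = 1" .
        have pos: "m + n > 0" using mn(1) by simp
        have "root_of_unity z" unfolding root_of_unity_def
          by (rule exI[where x="m + n"], rule conjI[OF pos e])
        then show False using that by simp
      qed
      show "qm \<chi> g i i \<in> ?V" if "i \<in> idx \<theta>" for i using H q0 that by simp
      show "comm (qm \<chi> g x x) (qm \<chi> g y y)" if A: "dynkin_adj \<theta> a x y" for x y
      proof -
        have F: "a x y < 0 \<and> a y x < 0 \<and>
         qm \<chi> g x x powi a x y = qm \<chi> g y y powi a y x \<and> x \<in> idx \<theta> \<and> y \<in> idx \<theta>"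
          by (rule adj_facts[OF D A])
        have e: "qm \<chi> g x x ^ nat (- a x y) = qm \<chi> g y y ^ nat (- a y x)"
          using F by (intro powi_neg_eq) auto
        have p: "nat (- a x y) > 0" "nat (- a y x) > 0" using F by auto
        show ?thesis unfolding comm_def
          by (rule exI[where x="nat (- a x y)"], rule conjI[OF p(1)], rule exI[where x="nat (- a y x)"], rule conjI[OF p(2)], rule e)
      qed
    qed (rule D)
  qed
qed

end
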